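(* Let $\bar F,\bar G\in C^1([a,b],\mathbb{R}_\mathcal{I})$. Then $$\bar F(b)\bar G(b)-\bar F(a)\bar G(a)=(IR)\int_a^b\bar F'(t)\bar G(t)\,dt+(IR)\int_a^b\bar F(t)\bar G'(t)\,dt.$$
   Context: An interval number is a closed interval $\bar a=[a_l,a_r]$ with $a_l<a_r$ real; $\mathbb{R}_\mathcal{I}$ is the set of interval numbers. Write $a_c=(a_l+a_r)/2$, $a_w=(a_r-a_l)/2>0$, $\bar a=\langle a_c;a_w\rangle=[a_c-a_w,a_c+a_w]$. Operations: $\bar a+\bar b=\langle a_c+b_c;a_wb_w\rangle$, $\bar a-\bar b=\langle a_c-b_c;a_w/b_w\rangle$, $k\bar a=\langle ka_c;a_w^k\rangle$ for real $k$, $\bar a\bar b=\langle a_cb_c;e^{\ln a_w\ln b_w}\rangle$; for real $h\ne0$, $\bar c/h=\langle c_c/h;c_w^{1/h}\rangle$. Distance $d(\bar a,\bar b)=\sqrt{(a_c-b_c)^2+(\ln a_w-\ln b_w)^2}$; continuity and limits w.r.t. $d$. Derivative: $\bar F'(x)=\lim_{h\to0}\frac{\bar F(x+h)-\bar F(x)}{h}$; $C^1([a,b],\mathbb{R}_\mathcal{I})$ is the set of interval-valued functions on $[a,b]$ that are differentiable on $[a,b]$ with continuous derivative. Products of interval-valued functions are pointwise. Interval Riemann integral: $\bar A=(IR)\int_a^b\bar f$ if for every $\varepsilon>0$ there is $\delta>0$ such that for every partition $a=t_0<\dots<t_n=b$ with mesh $<\delta$ and tags $\xi_i\in[t_{i-1},t_i]$,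 $d(\sum_i(t_i-t_{i-1})\bar f(\xi_i),\bar A)<\varepsilon$. *)

theory Defs
  imports Complex_Main
begin

typedef inum = "{(l::real, r::real). l < r}"
  by (rule exI[of _ "(0,1)"]) simp

definition ilo :: "inum \<Rightarrow> real" where "ilo a = fst (Rep_inum a)"
definition ihi :: "inum \<Rightarrow> real" where "ihi a = snd (Rep_inum a)"

definition ctr :: "inum \<Rightarrow> real" where "ctr a = (ilo a + ihi a) / 2"
definition wid :: "inum \<Rightarrow> real" where "wid a = (ihi a - ilo a) / 2"

text \<open>the interval number with centre c and width w (meant for w > 0)\<close>
definition mk :: "real \<Rightarrow> real \<Rightarrow> inum" where "mk c w = Abs_inum (c - w, c + w)"

definition iadd :: "inum \<Rightarrow> inum \<Rightarrow> inum" where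
  "iadd a b = mk (ctr a + ctr b) (wid a * wid b)"
definition isub :: "inum \<Rightarrow> inum \<Rightarrow> inum" where
  "isub a b = mk (ctr a - ctr b) (wid a / wid b)"
definition iscale :: "real \<Rightarrow> inum \<Rightarrow> inum" where
  "iscale k a = mk (k * ctr a) (wid a powr k)"
definition imul :: "inum \<Rightarrow> inum \<Rightarrow> inum" where
  "imul a b = mk (ctr a * ctr b) (exp (ln (wid a) * ln (wid b)))"
definition idivr :: "inum \<Rightarrow> real \<Rightarrow> inum" where
  "idivr c h = mk (ctr c / h) (wid c powr (1 / h))"

definition idist :: "inum \<Rightarrow> inum \<Rightarrow> real" where
  "idist a b = sqrt ((ctr a - ctr b)^2 + (ln (wid a) - ln (wid b))^2)"

text \<open>neutral element of iadd: centre 0, width 1\<close>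
definition izero :: inum where "izero = mk 0 1"

fun isum :: "(nat \<Rightarrow> inum) \<Rightarrow> nat \<Rightarrow> inum" where
  "isum g 0 = izero"
| "isum g (Suc n) = iadd (isum g n) (g (Suc n))"

definition ihas_deriv_within :: "(real \<Rightarrow> inum) \<Rightarrow> inum \<Rightarrow> real \<Rightarrow> real \<Rightarrow> real \<Rightarrow> bool" where
  "ihas_deriv_within F D x a b \<longleftrightarrow>
     (\<forall>\<epsilon>>0. \<exists>\<delta>>0. \<forall>h. h \<noteq> 0 \<and> \<bar>h\<bar> < \<delta> \<and> x + h \<in> {a..b} \<longrightarrow>
        idist (idivr (isub (F (x + h)) (F x)) h) D < \<epsilon>)"

definition icontinuous_on :: "real \<Rightarrow> real \<Rightarrow> (real \<Rightarrow> inum) \<Rightarrow> bool" where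
  "icontinuous_on a b F \<longleftrightarrow>
     (\<forall>x\<in>{a..b}. \<forall>\<epsilon>>0. \<exists>\<delta>>0. \<forall>y\<in>{a..b}. \<bar>y - x\<bar> < \<delta> \<longrightarrow> idist (F y) (F x) < \<epsilon>)"

definition iC1_with_deriv :: "real \<Rightarrow> real \<Rightarrow> (real \<Rightarrow> inum) \<Rightarrow> (real \<Rightarrow> inum) \<Rightarrow> bool" where
  "iC1_with_deriv a b F F' \<longleftrightarrow>
     (\<forall>x\<in>{a..b}. ihas_deriv_within F (F' x) x a b) \<and> icontinuous_on a b F'"

definition ihas_IR_integral :: "(real \<Rightarrow> inum) \<Rightarrow> inum \<Rightarrow> real \<Rightarrow> real \<Rightarrow> bool" where
  "ihas_IR_integral f A a b \<longleftrightarrow>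
     (\<forall>\<epsilon>>0. \<exists>\<delta>>0. \<forall>n (t::nat \<Rightarrow> real) (\<xi>::nat \<Rightarrow> real).
        t 0 = a \<and> t n = b \<and> (\<forall>i\<in>{1..n}. t (i - 1) < t i \<and> t i - t (i - 1) < \<delta>
          \<and> t (i - 1) \<le> \<xi> i \<and> \<xi> i \<le> t i)
        \<longrightarrow> idist (isum (\<lambda>i. iscale (t i - t (i - 1)) (f (\<xi> i))) n) A < \<epsilon>)"

end

theory Submission
  imports Defs "HOL-Analysis.Analysis"
begin

lemma riemann_real:
  fixes f :: "real \<Rightarrow> real"
  assumes ab: "a < b" and cf: "continuous_on {a..b} f"
  shows "\<forall>\<epsilon>>0. \<exists>\<delta>>0. \<forall>n (t::nat \<Rightarrow> real) (\<xi>::nat \<Rightarrow> real).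
        t 0 = a \<and> t n = b \<and> (\<forall>i\<in>{1..n}. t (i - 1) < t i \<and> t i - t (i - 1) < \<delta>
          \<and> t (i - 1) \<le> \<xi> i \<and> \<xi> i \<le> t i)
        \<longrightarrow> \<bar>(\<Sum>i\<in>{1..n}. (t i - t (i - 1)) * f (\<xi> i)) - integral {a..b} f\<bar> < \<epsilon>"
proof (intro allI impI)
  fix \<epsilon> :: real assume ep: "\<epsilon> > 0"
  define e where "e = \<epsilon> / (2 * (b - a))"
  have e0: "e > 0" using ep ab by (simp add: e_def)
  have uc: "uniformly_continuous_on {a..b} f"
    using cf compact_uniformly_continuous by blast
  then obtain d where d0: "d > 0" and
    dd: "\<And>x x'. x \<in> {a..b} \<Longrightarrow> x' \<in> {a..b} \<Longrightarrow> dist x' x < d \<Longrightarrow> dist (f x') (f x) < e"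
    using e0 unfolding uniformly_continuous_on_def by metis
  show "\<exists>\<delta>>0. \<forall>n (t::nat \<Rightarrow> real) (\<xi>::nat \<Rightarrow> real).
        t 0 = a \<and> t n = b \<and> (\<forall>i\<in>{1..n}. t (i - 1) < t i \<and> t i - t (i - 1) < \<delta>
          \<and> t (i - 1) \<le> \<xi> i \<and> \<xi> i \<le> t i)
        \<longrightarrow> \<bar>(\<Sum>i\<in>{1..n}. (t i - t (i - 1)) * f (\<xi> i)) - integral {a..b} f\<bar> < \<epsilon>"
  proof (intro exI[of _ d] conjI allI impI d0)
    fix n and t \<xi> :: "nat \<Rightarrow> real"
    assume H: "t 0 = a \<and> t n = b \<and> (\<forall>i\<in>{1..n}. t (i - 1) < t i \<and> t i - t (i - 1) < d
          \<and> t (i - 1) \<le> \<xi> i \<and> \<xi> i \<le> t i)"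
    have H1: "t k < t (Suc k) \<and> t (Suc k) - t k < d \<and> t k \<le> \<xi> (Suc k) \<and> \<xi> (Suc k) \<le> t (Suc k)"
      if "k < n" for k
      using H that by (metis One_nat_def Suc_leI atLeastAtMost_iff diff_Suc_1 le_add1 plus_1_eq_Suc less_eq_Suc_le)
    have mono: "t i \<le> t j" if "i \<le> j" "j \<le> n" for i j
      using that
    proof (induction j)
      case 0 then show ?case by simp
    next
      case (Suc j)
      show ?case
      proof (cases "i = Suc j")
        case True then show ?thesis by simp
      next
        case False
        then have "t i \<le> t j" using Suc by simp
        also have "t j < t (Suc j)" using H1[of j] Suc by simp
        finally show ?thesis by simp
      qed
    qed
    have tab: "t i \<in> {a..b}" if "i \<le> n" for i
      using mono[of 0 i] mono[of i n] that H by simp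
    define \<Phi> where "\<Phi> x = integral {a..x} f" for x
    have piece: "\<bar>(t (Suc k) - t k) * f (\<xi> (Suc k)) - (\<Phi> (t (Suc k)) - \<Phi> (t k))\<bar>
                 \<le> e * (t (Suc k) - t k)" if k: "k < n" for k
    proof -
      define x where "x = t k"
      define y where "y = t (Suc k)"
      define z where "z = \<xi> (Suc k)"
      have xy: "x < y" "y - x < d" "x \<le> z" "z \<le> y" using H1[OF k] by (auto simp: x_def y_def z_def)
      have xab: "x \<in> {a..b}" "y \<in> {a..b}" using tab k by (auto simp: x_def y_def)
      have zab: "z \<in> {a..b}" using xab xy by auto
      have int: "f integrable_on {a..y}"
        by (rule integrable_continuous_interval, rule continuous_on_subset[OF cf]) (use xab in auto)
      have "integral {a..x} f + integral {x..y} f = integral {a..y} f"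
        using Henstock_Kurzweil_Integration.integral_combine[OF _ _ int, of x] xab xy by auto
      then have phi: "\<Phi> y - \<Phi> x = integral {x..y} f" by (simp add: \<Phi>_def)
      have int2: "f integrable_on {x..y}"
        by (rule integrable_continuous_interval, rule continuous_on_subset[OF cf]) (use xab in auto)
      have hi: "((\<lambda>s. f s - f z) has_integral (integral {x..y} f - (y - x) * f z)) {x..y}"
        using has_integral_diff[OF integrable_integral[OF int2] has_integral_const_real[of "f z" x y]] xy
        by simp
      have "norm (integral {x..y} f - (y - x) * f z) \<le> e * Henstock_Kurzweil_Integration.content {x..y}"
      proof (rule has_integral_bound_real[OF _ _ hi])
        show "0 \<le> e" using e0 by simp
        show "finite {}" by simp
        fix s assume s: "s \<in> {x..y} - {}"
        have "s \<in> {a..b}" using s xab by auto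
        moreover have "dist s z < d" using s xy by (auto simp: dist_real_def)
        ultimately have "dist (f s) (f z) < e" using dd zab by blast
        then show "norm (f s - f z) \<le> e" by (simp add: dist_real_def)
      qed
      then show ?thesis using xy phi by (simp add: x_def[symmetric] y_def[symmetric] z_def[symmetric] abs_minus_commute)
    qed
    have sum1: "(\<Sum>i\<in>{1..n}. (t i - t (i - 1)) * f (\<xi> i)) = (\<Sum>k<n. (t (Suc k) - t k) * f (\<xi> (Suc k)))"
      using sum.atLeast1_atMost_eq[of "\<lambda>i. (t i - t (i - 1)) * f (\<xi> i)" n] by simp
    have tel: "(\<Sum>k<n. \<Phi> (t (Suc k)) - \<Phi> (t k)) = integral {a..b} f"
      using sum_lessThan_telescope[of "\<lambda>k. \<Phi> (t k)" n] H by (simp add: \<Phi>_def)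
    have tel2: "(\<Sum>k<n. t (Suc k) - t k) = b - a"
      using sum_lessThan_telescope[of t n] H by simp
    have "\<bar>(\<Sum>i\<in>{1..n}. (t i - t (i - 1)) * f (\<xi> i)) - integral {a..b} f\<bar>
        = \<bar>\<Sum>k<n. (t (Suc k) - t k) * f (\<xi> (Suc k)) - (\<Phi> (t (Suc k)) - \<Phi> (t k))\<bar>"
      unfolding sum1 tel[symmetric] by (simp add: sum_subtractf)
    also have "\<dots> \<le> (\<Sum>k<n. \<bar>(t (Suc k) - t k) * f (\<xi> (Suc k)) - (\<Phi> (t (Suc k)) - \<Phi> (t k))\<bar>)"
      by (rule sum_abs)
    also have "\<dots> \<le> (\<Sum>k<n. e * (t (Suc k) - t k))"
      by (rule sum_mono) (use piece in auto)
    also have "\<dots> = e * (b - a)" by (simp add: sum_distrib_left[symmetric] tel2)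
    also have "\<dots> = \<epsilon> / 2" using ab by (simp add: e_def field_simps)
    also have "\<dots> < \<epsilon>" using ep by simp
    finally show "\<bar>(\<Sum>i\<in>{1..n}. (t i - t (i - 1)) * f (\<xi> i)) - integral {a..b} f\<bar> < \<epsilon>" .
  qed
qed

lemma wid_pos: "wid x > 0"
  using Rep_inum[of x] by (auto simp: wid_def ilo_def ihi_def split: prod.splits)

lemma mk_rep: "w > 0 \<Longrightarrow> Rep_inum (mk c w) = (c - w, c + w)"
  unfolding mk_def by (rule Abs_inum_inverse) simp

lemma ctr_mk[simp]: "w > 0 \<Longrightarrow> ctr (mk c w) = c"
  by (simp add: ctr_def ilo_def ihi_def mk_rep)

lemma wid_mk[simp]: "w > 0 \<Longrightarrow> wid (mk c w) = w"
  by (simp add: wid_def ilo_def ihi_def mk_rep)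

lemma inum_eqI:
  assumes "ctr x = ctr y" "ln (wid x) = ln (wid y)"
  shows "x = y"
proof -
  have w: "wid x = wid y" using assms(2) wid_pos[of x] wid_pos[of y] by simp
  have "ilo x = ilo y" "ihi x = ihi y" using assms(1) w
    by (simp_all add: ctr_def wid_def)
  then have "Rep_inum x = Rep_inum y" by (simp add: ilo_def ihi_def prod_eq_iff)
  then show ?thesis using Rep_inum_inject by blast
qed

lemma ops[simp]:
  "ctr (iadd x y) = ctr x + ctr y" "ln (wid (iadd x y)) = ln (wid x) + ln (wid y)"
  "ctr (isub x y) = ctr x - ctr y" "ln (wid (isub x y)) = ln (wid x) - ln (wid y)"
  "ctr (iscale k x) = k * ctr x" "ln (wid (iscale k x)) = k * ln (wid x)"
  "ctr (imul x y) = ctr x * ctr y" "ln (wid (imul x y)) = ln (wid x) * ln (wid y)"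
  "ctr (idivr x h) = ctr x / h" "ln (wid (idivr x h)) = ln (wid x) / h"
  "ctr izero = 0" "ln (wid izero) = 0"
  using wid_pos[of x] wid_pos[of y]
  by (simp_all add: iadd_def isub_def iscale_def imul_def idivr_def izero_def ln_mult ln_div ln_powr)

lemma isum_comp:
  "ctr (isum g n) = (\<Sum>i\<in>{1..n}. ctr (g i))" "ln (wid (isum g n)) = (\<Sum>i\<in>{1..n}. ln (wid (g i)))"
  by (induction n) auto

lemma idist_ge:
  "\<bar>ctr x - ctr y\<bar> \<le> idist x y" "\<bar>ln (wid x) - ln (wid y)\<bar> \<le> idist x y"
  unfolding idist_def
  by (metis add.commute le_add_same_cancel1 real_sqrt_abs real_sqrt_le_mono zero_le_power2)+

lemma idist_le: "idist x y \<le> \<bar>ctr x - ctr y\<bar> + \<bar>ln (wid x) - ln (wid y)\<bar>"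
proof -
  let ?p = "ctr x - ctr y" and ?q = "ln (wid x) - ln (wid y)"
  have "?p^2 + ?q^2 \<le> (\<bar>?p\<bar> + \<bar>?q\<bar>)^2" by (simp add: power2_eq_square algebra_simps)
  then have "sqrt (?p^2 + ?q^2) \<le> sqrt ((\<bar>?p\<bar> + \<bar>?q\<bar>)^2)" by (rule real_sqrt_le_mono)
  then show ?thesis by (simp add: idist_def)
qed

lemma deriv_comp:
  assumes "ihas_deriv_within F D x a b"
  shows "((\<lambda>y. ctr (F y)) has_real_derivative ctr D) (at x within {a..b})"
    "((\<lambda>y. ln (wid (F y))) has_real_derivative ln (wid D)) (at x within {a..b})"
proof -
  have key: "\<forall>\<epsilon>>0. \<exists>\<delta>>0. \<forall>y\<in>{a..b}. 0 < dist y x \<and> dist y x < \<delta> \<longrightarrow>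
      idist (idivr (isub (F y) (F x)) (y - x)) D < \<epsilon>"
  proof (intro allI impI)
    fix \<epsilon> :: real assume "\<epsilon> > 0"
    then obtain \<delta> where "\<delta> > 0" and d: "\<forall>h. h \<noteq> 0 \<and> \<bar>h\<bar> < \<delta> \<and> x + h \<in> {a..b} \<longrightarrow>
        idist (idivr (isub (F (x + h)) (F x)) h) D < \<epsilon>"
      using assms unfolding ihas_deriv_within_def by blast
    show "\<exists>\<delta>>0. \<forall>y\<in>{a..b}. 0 < dist y x \<and> dist y x < \<delta> \<longrightarrow>
      idist (idivr (isub (F y) (F x)) (y - x)) D < \<epsilon>"
    proof (intro exI[of _ \<delta>] conjI ballI impI)
      fix y assume "y \<in> {a..b}" "0 < dist y x \<and> dist y x < \<delta>"
      then show "idist (idivr (isub (F y) (F x)) (y - x)) D < \<epsilon>"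
        using d[rule_format, of "y - x"] by (auto simp: dist_real_def)
    qed (rule \<open>\<delta> > 0\<close>)
  qed
  show "((\<lambda>y. ctr (F y)) has_real_derivative ctr D) (at x within {a..b})"
    unfolding has_field_derivative_iff Lim_within
  proof (intro allI impI)
    fix \<epsilon> :: real assume "\<epsilon> > 0"
    then obtain \<delta> where "\<delta> > 0" and d: "\<forall>y\<in>{a..b}. 0 < dist y x \<and> dist y x < \<delta> \<longrightarrow>
      idist (idivr (isub (F y) (F x)) (y - x)) D < \<epsilon>" using key by blast
    show "\<exists>\<delta>>0. \<forall>y\<in>{a..b}. 0 < dist y x \<and> dist y x < \<delta> \<longrightarrow>
        dist ((ctr (F y) - ctr (F x)) / (y - x)) (ctr D) < \<epsilon>"
    proof (intro exI[of _ \<delta>] conjI ballI impI)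
      fix y assume y: "y \<in> {a..b}" "0 < dist y x \<and> dist y x < \<delta>"
      have "idist (idivr (isub (F y) (F x)) (y - x)) D < \<epsilon>" using d y by blast
      then show "dist ((ctr (F y) - ctr (F x)) / (y - x)) (ctr D) < \<epsilon>"
        using idist_ge(1)[of "idivr (isub (F y) (F x)) (y - x)" D]
        unfolding dist_real_def ops by linarith
    qed (rule \<open>\<delta> > 0\<close>)
  qed
  show "((\<lambda>y. ln (wid (F y))) has_real_derivative ln (wid D)) (at x within {a..b})"
    unfolding has_field_derivative_iff Lim_within
  proof (intro allI impI)
    fix \<epsilon> :: real assume "\<epsilon> > 0"
    then obtain \<delta> where "\<delta> > 0" and d: "\<forall>y\<in>{a..b}. 0 < dist y x \<and> dist y x < \<delta> \<longrightarrow>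
      idist (idivr (isub (F y) (F x)) (y - x)) D < \<epsilon>" using key by blast
    show "\<exists>\<delta>>0. \<forall>y\<in>{a..b}. 0 < dist y x \<and> dist y x < \<delta> \<longrightarrow>
        dist ((ln (wid (F y)) - ln (wid (F x))) / (y - x)) (ln (wid D)) < \<epsilon>"
    proof (intro exI[of _ \<delta>] conjI ballI impI)
      fix y assume y: "y \<in> {a..b}" "0 < dist y x \<and> dist y x < \<delta>"
      have "idist (idivr (isub (F y) (F x)) (y - x)) D < \<epsilon>" using d y by blast
      then show "dist ((ln (wid (F y)) - ln (wid (F x))) / (y - x)) (ln (wid D)) < \<epsilon>"
        using idist_ge(2)[of "idivr (isub (F y) (F x)) (y - x)" D]
        unfolding dist_real_def ops by linarith
    qed (rule \<open>\<delta> > 0\<close>)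
  qed
qed

lemma cont_comp:
  assumes "icontinuous_on a b F"
  shows "continuous_on {a..b} (\<lambda>y. ctr (F y))" "continuous_on {a..b} (\<lambda>y. ln (wid (F y)))"
  using assms unfolding icontinuous_on_def continuous_on_iff dist_real_def
  by (meson idist_ge order.strict_trans1)+

lemma ibp_real:
  fixes f g f' g' :: "real \<Rightarrow> real"
  assumes ab: "a < b"
    and df: "\<And>x. x \<in> {a..b} \<Longrightarrow> (f has_real_derivative f' x) (at x within {a..b})"
    and dg: "\<And>x. x \<in> {a..b} \<Longrightarrow> (g has_real_derivative g' x) (at x within {a..b})"
    and cf': "continuous_on {a..b} f'" and cg': "continuous_on {a..b} g'"
  shows "continuous_on {a..b} (\<lambda>t. f' t * g t)" "continuous_on {a..b} (\<lambda>t. f t * g' t)"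
    "integral {a..b} (\<lambda>t. f' t * g t) + integral {a..b} (\<lambda>t. f t * g' t) = f b * g b - f a * g a"
proof -
  have cf: "continuous_on {a..b} f" by (rule DERIV_continuous_on[OF df])
  have cg: "continuous_on {a..b} g" by (rule DERIV_continuous_on[OF dg])
  show c1: "continuous_on {a..b} (\<lambda>t. f' t * g t)" using cf' cg by (intro continuous_intros)
  show c2: "continuous_on {a..b} (\<lambda>t. f t * g' t)" using cf cg' by (intro continuous_intros)
  have "((\<lambda>t. f t * g' t + f' t * g t) has_integral (f b * g b - f a * g a)) {a..b}"
    using fundamental_theorem_of_calculus[of a b "\<lambda>t. f t * g t" "\<lambda>t. f t * g' t + f' t * g t"] ab
      DERIV_mult'[OF df dg]
    by (simp add: has_real_derivative_iff_has_vector_derivative)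
  moreover have "((\<lambda>t. f t * g' t + f' t * g t) has_integral
      (integral {a..b} (\<lambda>t. f' t * g t) + integral {a..b} (\<lambda>t. f t * g' t))) {a..b}"
    using has_integral_add[OF integrable_integral[OF integrable_continuous_interval[OF c2]]
        integrable_integral[OF integrable_continuous_interval[OF c1]]]
    by (simp add: add.commute)
  ultimately show "integral {a..b} (\<lambda>t. f' t * g t) + integral {a..b} (\<lambda>t. f t * g' t) = f b * g b - f a * g a"
    using has_integral_unique by blast
qed

lemma IR_from_comp:
  fixes h :: "real \<Rightarrow> inum"
  assumes ab: "a < b" and c1: "continuous_on {a..b} (\<lambda>t. ctr (h t))"
    and c2: "continuous_on {a..b} (\<lambda>t. ln (wid (h t)))"
  shows "ihas_IR_integral h (mk (integral {a..b} (\<lambda>t. ctr (h t)))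
            (exp (integral {a..b} (\<lambda>t. ln (wid (h t)))))) a b"
  unfolding ihas_IR_integral_def
proof (intro allI impI)
  fix \<epsilon> :: real assume ep: "\<epsilon> > 0"
  obtain d1 where d1: "d1 > 0" and D1: "\<forall>n (t::nat \<Rightarrow> real) (\<xi>::nat \<Rightarrow> real).
        t 0 = a \<and> t n = b \<and> (\<forall>i\<in>{1..n}. t (i - 1) < t i \<and> t i - t (i - 1) < d1
          \<and> t (i - 1) \<le> \<xi> i \<and> \<xi> i \<le> t i)
        \<longrightarrow> \<bar>(\<Sum>i\<in>{1..n}. (t i - t (i - 1)) * ctr (h (\<xi> i))) - integral {a..b} (\<lambda>t. ctr (h t))\<bar> < \<epsilon>/2"
    using mp[OF spec[OF riemann_real[OF ab c1], of "\<epsilon>/2"] half_gt_zero[OF ep]] by blast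
  obtain d2 where d2: "d2 > 0" and D2: "\<forall>n (t::nat \<Rightarrow> real) (\<xi>::nat \<Rightarrow> real).
        t 0 = a \<and> t n = b \<and> (\<forall>i\<in>{1..n}. t (i - 1) < t i \<and> t i - t (i - 1) < d2
          \<and> t (i - 1) \<le> \<xi> i \<and> \<xi> i \<le> t i)
        \<longrightarrow> \<bar>(\<Sum>i\<in>{1..n}. (t i - t (i - 1)) * ln (wid (h (\<xi> i)))) - integral {a..b} (\<lambda>t. ln (wid (h t)))\<bar> < \<epsilon>/2"
    using mp[OF spec[OF riemann_real[OF ab c2], of "\<epsilon>/2"] half_gt_zero[OF ep]] by blast
  show "\<exists>\<delta>>0. \<forall>n (t::nat \<Rightarrow> real) (\<xi>::nat \<Rightarrow> real).
        t 0 = a \<and> t n = b \<and> (\<forall>i\<in>{1..n}. t (i - 1) < t i \<and> t i - t (i - 1) < \<delta>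
          \<and> t (i - 1) \<le> \<xi> i \<and> \<xi> i \<le> t i)
        \<longrightarrow> idist (isum (\<lambda>i. iscale (t i - t (i - 1)) (h (\<xi> i))) n)
             (mk (integral {a..b} (\<lambda>t. ctr (h t))) (exp (integral {a..b} (\<lambda>t. ln (wid (h t)))))) < \<epsilon>"
  proof (intro exI[of _ "min d1 d2"] conjI allI impI)
    show "min d1 d2 > 0" using d1 d2 by simp
    fix n and t \<xi> :: "nat \<Rightarrow> real"
    assume H: "t 0 = a \<and> t n = b \<and> (\<forall>i\<in>{1..n}. t (i - 1) < t i \<and> t i - t (i - 1) < min d1 d2
          \<and> t (i - 1) \<le> \<xi> i \<and> \<xi> i \<le> t i)"
    have H1: "\<bar>(\<Sum>i\<in>{1..n}. (t i - t (i - 1)) * ctr (h (\<xi> i))) - integral {a..b} (\<lambda>t. ctr (h t))\<bar> < \<epsilon>/2"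
      using D1 H by auto
    have H2: "\<bar>(\<Sum>i\<in>{1..n}. (t i - t (i - 1)) * ln (wid (h (\<xi> i)))) - integral {a..b} (\<lambda>t. ln (wid (h t)))\<bar> < \<epsilon>/2"
      using D2 H by auto
    show "idist (isum (\<lambda>i. iscale (t i - t (i - 1)) (h (\<xi> i))) n)
             (mk (integral {a..b} (\<lambda>t. ctr (h t))) (exp (integral {a..b} (\<lambda>t. ln (wid (h t)))))) < \<epsilon>"
      using idist_le[of "isum (\<lambda>i. iscale (t i - t (i - 1)) (h (\<xi> i))) n"
          "mk (integral {a..b} (\<lambda>t. ctr (h t))) (exp (integral {a..b} (\<lambda>t. ln (wid (h t)))))"] H1 H2
      unfolding isum_comp ops by simp
  qed
qed

theorem theorem5p11:
  fixes F G F' G' :: "real \<Rightarrow> inum" and a b :: real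
  assumes "a < b"
    and "iC1_with_deriv a b F F'"
    and "iC1_with_deriv a b G G'"
  shows "\<exists>A B. ihas_IR_integral (\<lambda>t. imul (F' t) (G t)) A a b
             \<and> ihas_IR_integral (\<lambda>t. imul (F t) (G' t)) B a b
             \<and> isub (imul (F b) (G b)) (imul (F a) (G a)) = iadd A B"
proof -
  have dF: "\<And>x. x \<in> {a..b} \<Longrightarrow> ihas_deriv_within F (F' x) x a b"
    and cF: "icontinuous_on a b F'" using assms(2) unfolding iC1_with_deriv_def by auto
  have dG: "\<And>x. x \<in> {a..b} \<Longrightarrow> ihas_deriv_within G (G' x) x a b"
    and cG: "icontinuous_on a b G'" using assms(3) unfolding iC1_with_deriv_def by auto
  note I1 = ibp_real[OF assms(1) deriv_comp(1)[OF dF] deriv_comp(1)[OF dG] cont_comp(1)[OF cF] cont_comp(1)[OF cG]]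
  note I2 = ibp_real[OF assms(1) deriv_comp(2)[OF dF] deriv_comp(2)[OF dG] cont_comp(2)[OF cF] cont_comp(2)[OF cG]]
  let ?h = "\<lambda>t. imul (F' t) (G t)" and ?k = "\<lambda>t. imul (F t) (G' t)"
  let ?A = "mk (integral {a..b} (\<lambda>t. ctr (?h t))) (exp (integral {a..b} (\<lambda>t. ln (wid (?h t)))))"
  let ?B = "mk (integral {a..b} (\<lambda>t. ctr (?k t))) (exp (integral {a..b} (\<lambda>t. ln (wid (?k t)))))"
  have "ihas_IR_integral ?h ?A a b"
    by (rule IR_from_comp[OF assms(1)]) (use I1 I2 in simp_all)
  moreover have "ihas_IR_integral ?k ?B a b"
    by (rule IR_from_comp[OF assms(1)]) (use I1 I2 in simp_all)
  moreover have "isub (imul (F b) (G b)) (imul (F a) (G a)) = iadd ?A ?B"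
    by (rule inum_eqI) (use I1(3) I2(3) in simp_all)
  ultimately show ?thesis by blast
qed

end
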